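(* Let $(x_n)$ be generated by (HPPA). Let ${\rm a},{\rm E}:\mathbb{N}\to\mathbb{N}$ be monotone functions satisfying (Q1) and (Q4) respectively, and let $\mathcal{E},\mathcal{D}\in\mathbb{N}$ satisfy $\mathcal{E}\geq 1+\sum_{i=0}^{{\rm E}(0)}\|e_i\|$ and $\mathcal{D}\geq\|x_0-p\|$ for some $p\in S$. Define $\xi(k):=\max\{{\rm a}(2(2\mathcal{D}+\mathcal{E})(k+1)-1),\ {\rm E}(2k+1)+1\}$. Then $$\forall k\in\mathbb{N}\ \forall n\geq\xi(k)\ \left(\|x_{n+1}-J_{\beta_n}(x_n)\|\leq\frac{1}{k+1}\right).$$
   Context: $X$ is a real Hilbert space, $\mathsf{A}:X\to 2^X$ a maximal monotone operator with zero set $S=\{x:0\in\mathsf{A}(x)\}$, assumed nonempty. For $\beta>0$, $J_\beta:=(Id+\beta\mathsf{A})^{-1}$ is the resolvent, a single-valued nonexpansive map with fixed point set $S$. Given $(\alpha_n)\subset\,]0,1[$, $(\beta_n)\subset(0,\infty)$, $(e_n)\subset X$, $x_0\in X$, (HPPA) is the sequence $x_{n+1}:=\alpha_n x_0+(1-\alpha_n)(J_{\beta_n}(x_n)+e_n)$. (Q1): $\forall k\,\forall n\geq{\rm a}(k)\ \alpha_n\leq\frac{1}{k+1}$. (Q4): $\forall k\,\forall n\ \sum_{i={\rm E}(k)+1}^{{\rm E}(k)+n}\|e_i\|\leq\frac{1}{k+1}$. Monotone means nondecreasing. *)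

theory Defs
  imports "HOL-Analysis.Analysis"
begin

definition monotone_op :: "('a::real_inner \<Rightarrow> 'a set) \<Rightarrow> bool" where
  "monotone_op A \<longleftrightarrow> (\<forall>x y u v. u \<in> A x \<longrightarrow> v \<in> A y \<longrightarrow> inner (x - y) (u - v) \<ge> 0)"

definition maximal_monotone :: "('a::real_inner \<Rightarrow> 'a set) \<Rightarrow> bool" where
  "maximal_monotone A \<longleftrightarrow> monotone_op A \<and>
     (\<forall>B. monotone_op B \<and> (\<forall>x. A x \<subseteq> B x) \<longrightarrow> B = A)"

text \<open>Resolvent J_beta = (Id + beta A)^{-1}: the unique y with x \<in> y + beta A(y).\<close>
definition resolvent :: "('a::real_inner \<Rightarrow> 'a set) \<Rightarrow> real \<Rightarrow> 'a \<Rightarrow> 'a" where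
  "resolvent A \<beta> x = (THE y. \<exists>u \<in> A y. x = y + \<beta> *\<^sub>R u)"

definition zeros_op :: "('a::real_inner \<Rightarrow> 'a set) \<Rightarrow> 'a set" where
  "zeros_op A = {x. 0 \<in> A x}"

end

theory Submission
  imports Defs
begin


inductive_set ach :: "('a::real_inner \<times> 'a) set \<Rightarrow> (real \<times> 'a \<times> 'a) set" for G where
  base: "(c,d) \<in> G \<Longrightarrow> (inner c d, c, d) \<in> ach G"
| mix: "(L1,C1,D1) \<in> ach G \<Longrightarrow> (L2,C2,D2) \<in> ach G \<Longrightarrow> 0 \<le> t \<Longrightarrow> t \<le> 1 \<Longrightarrow>
     ((1-t)*L1 + t*L2, (1-t) *\<^sub>R C1 + t *\<^sub>R C2, (1-t) *\<^sub>R D1 + t *\<^sub>R D2) \<in> ach G"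

definition Kx :: "real \<times> 'a::real_inner \<times> 'a \<Rightarrow> real \<times> 'a \<times> 'a \<Rightarrow> real" where
  "Kx u v = fst u + fst v - inner (fst (snd u)) (snd (snd v)) - inner (fst (snd v)) (snd (snd u))"

lemma Kx_sym: "Kx u v = Kx v u"
  by (simp add: Kx_def)

lemma Kx_mix: "Kx (L,C,D) ((1-t)*L1 + t*L2, (1-t) *\<^sub>R C1 + t *\<^sub>R C2, (1-t) *\<^sub>R D1 + t *\<^sub>R D2)
   = (1-t) * Kx (L,C,D) (L1,C1,D1) + t * Kx (L,C,D) (L2,C2,D2)"
  by (simp add: Kx_def inner_add_left inner_add_right algebra_simps)

lemma Kx_base:
  assumes mon: "\<And>c d c' d'. (c,d)\<in>G \<Longrightarrow> (c',d')\<in>G \<Longrightarrow> inner (c-c') (d-d') \<le> 0"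
    and g: "(c,d) \<in> G" and v: "(L,C,D) \<in> ach G"
  shows "Kx (inner c d, c, d) (L,C,D) \<le> 0"
  using v
proof (induction rule: ach.induct)
  case (base c' d')
  have "Kx (inner c d, c, d) (inner c' d', c', d') = inner (c-c') (d-d')"
    by (simp add: Kx_def inner_diff_left inner_diff_right inner_commute)
  then show ?case using mon[OF g base] by simp
next
  case (mix L1 C1 D1 L2 C2 D2 t)
  show ?case unfolding Kx_mix using mix
    by (simp add: add_nonpos_nonpos mult_nonneg_nonpos)
qed

lemma Kx_ach:
  assumes mon: "\<And>c d c' d'. (c,d)\<in>G \<Longrightarrow> (c',d')\<in>G \<Longrightarrow> inner (c-c') (d-d') \<le> 0"
    and u: "(L0,C0,D0) \<in> ach G" and v: "v \<in> ach G"
  shows "Kx (L0,C0,D0) v \<le> 0"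
  using u
proof (induction rule: ach.induct)
  case (base c d)
  obtain L C D where vv: "v = (L,C,D)" by (cases v) auto
  then show ?case using Kx_base[OF mon base v[unfolded vv]] by blast
next
  case (mix L1 C1 D1 L2 C2 D2 t)
  obtain L C D where vv: "v = (L,C,D)" by (cases v) auto
  show ?case using mix unfolding vv Kx_sym[of _ "(L,C,D)"] Kx_mix
    by (simp add: add_nonpos_nonpos mult_nonneg_nonpos)
qed

definition Yv :: "real \<times> 'a::real_inner \<times> 'a \<Rightarrow> 'a" where
  "Yv u = (1/2) *\<^sub>R (fst (snd u) + snd (snd u))"

definition val :: "real \<times> 'a::real_inner \<times> 'a \<Rightarrow> real" where
  "val u = fst u - inner (Yv u) (Yv u)"

lemma val_nonpos:
  assumes mon: "\<And>c d c' d'. (c,d)\<in>G \<Longrightarrow> (c',d')\<in>G \<Longrightarrow> inner (c-c') (d-d') \<le> 0"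
    and u: "u \<in> ach G"
  shows "val u \<le> 0"
proof -
  obtain L C D where uu: "u = (L,C,D)" by (cases u) auto
  have k: "Kx u u \<le> 0" using Kx_ach[OF mon u[unfolded uu] u] uu by simp
  have sq: "0 \<le> inner (C - D) (C - D)" by simp
  have "val u = (Kx u u - inner (C - D) (C - D) / 2) / 2"
    unfolding uu val_def Yv_def Kx_def
    by (simp add: inner_add_left inner_add_right inner_diff_left inner_diff_right inner_commute algebra_simps) (simp add: field_simps)
  moreover have "\<And>v K q::real. v = (K - q/2)/2 \<Longrightarrow> K \<le> 0 \<Longrightarrow> 0 \<le> q \<Longrightarrow> v \<le> 0" by simp
  ultimately show ?thesis using k sq by blast
qed

lemma val_mid: "val ((1-t)*L1 + t*L2, (1-t) *\<^sub>R C1 + t *\<^sub>R C2, (1-t) *\<^sub>R D1 + t *\<^sub>R D2)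
  = (1-t) * val (L1,C1,D1) + t * val (L2,C2,D2) + t*(1-t) * inner (Yv (L1,C1,D1) - Yv (L2,C2,D2)) (Yv (L1,C1,D1) - Yv (L2,C2,D2))"
  unfolding val_def Yv_def
  by (simp add: inner_add_left inner_add_right inner_diff_left inner_diff_right inner_commute algebra_simps) (simp add: field_simps)

lemma val_mix_pt: "val ((1-t)*L + t*inner c d, (1-t) *\<^sub>R C + t *\<^sub>R c, (1-t) *\<^sub>R D + t *\<^sub>R d)
  = (1-t) * val (L,C,D) + t * inner (Yv (L,C,D) - c) (Yv (L,C,D) - d)
    - t^2 * inner (Yv (L,C,D) - (1/2) *\<^sub>R (c+d)) (Yv (L,C,D) - (1/2) *\<^sub>R (c+d))"
  unfolding val_def Yv_def
  by (simp add: inner_add_left inner_add_right inner_diff_left inner_diff_right inner_commute algebra_simps power2_eq_square) (simp add: field_simps)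

lemma inv_lim: "(\<lambda>n. 1/(real n + 1)) \<longlonglongrightarrow> 0"
  using LIMSEQ_inverse_real_of_nat by (simp add: divide_inverse add.commute)

lemma exists_point:
  fixes G :: "('a::{real_inner,complete_space} \<times> 'a) set"
  assumes mon: "\<And>c d c' d'. (c,d)\<in>G \<Longrightarrow> (c',d')\<in>G \<Longrightarrow> inner (c-c') (d-d') \<le> 0"
    and ne: "G \<noteq> {}"
  shows "\<exists>y. \<forall>c d. (c,d) \<in> G \<longrightarrow> inner (y - c) (y - d) \<le> 0"
proof -
  define S where "S = val ` ach G"
  obtain c0 d0 where g0: "(c0,d0)\<in>G" using ne by auto
  have Sne: "S \<noteq> {}" using ach.base[OF g0] S_def by auto
  have Sle: "\<forall>v\<in>S. v \<le> 0" using val_nonpos[OF mon] S_def by auto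
  have bdd: "bdd_above S" using Sle by (auto intro: bdd_aboveI)
  define s where "s = Sup S"
  have s_ub: "\<And>u. u \<in> ach G \<Longrightarrow> val u \<le> s"
  proof -
    fix u assume "u \<in> ach G"
    then have "val u \<in> S" using S_def by blast
    then show "val u \<le> s" unfolding s_def using cSup_upper[OF _ bdd] by blast
  qed
  have s0: "s \<le> 0" using cSup_least[OF Sne] Sle s_def by auto
  have "\<forall>n::nat. \<exists>u\<in>ach G. s - 1/(real n+1) < val u"
  proof
    fix n :: nat
    have "s - 1/(real n + 1) < Sup S" unfolding s_def[symmetric] by simp
    then obtain v where "v \<in> S" "s - 1/(real n+1) < v" using less_cSupE[OF _ Sne] by metis
    then show "\<exists>u\<in>ach G. s - 1/(real n+1) < val u" using S_def by auto
  qed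
  then obtain U where U: "\<And>n. U n \<in> ach G" "\<And>n. s - 1/(real n+1) < val (U n)" by metis
  define Y where "Y n = Yv (U n)" for n
  have dst: "inner (Y m - Y n) (Y m - Y n) \<le> 2/(real m+1) + 2/(real n+1)" for m n
  proof -
    obtain L1 C1 D1 where u1: "U m = (L1,C1,D1)" by (cases "U m") auto
    obtain L2 C2 D2 where u2: "U n = (L2,C2,D2)" by (cases "U n") auto
    have "((1-1/2)*L1 + (1/2)*L2, (1-1/2) *\<^sub>R C1 + (1/2) *\<^sub>R C2, (1-1/2) *\<^sub>R D1 + (1/2) *\<^sub>R D2) \<in> ach G"
      by (rule ach.mix) (use U(1)[of m] U(1)[of n] u1 u2 in auto)
    then have "val ((1-1/2)*L1 + (1/2)*L2, (1-1/2) *\<^sub>R C1 + (1/2) *\<^sub>R C2, (1-1/2) *\<^sub>R D1 + (1/2) *\<^sub>R D2) \<le> s"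
      by (rule s_ub)
    then have "(1-1/2) * val (U m) + (1/2) * val (U n) + (1/2)*(1-1/2) * inner (Y m - Y n) (Y m - Y n) \<le> s"
      unfolding val_mid Y_def u1 u2 .
    then show ?thesis using U(2)[of m] U(2)[of n] by simp
  qed
  have "Cauchy Y"
    unfolding Cauchy_iff
  proof (intro allI impI)
    fix e :: real assume e: "e > 0"
    obtain M :: nat where M: "4 / e^2 < real M" using reals_Archimedean2 by blast
    have M1: "4/(real M + 1) < e^2"
    proof -
      have "4 < e^2 * real M" using M e by (simp add: field_simps)
      also have "\<dots> \<le> e^2 * (real M + 1)" using e by simp
      finally show ?thesis by (simp add: field_simps)
    qed
    show "\<exists>M. \<forall>m\<ge>M. \<forall>n\<ge>M. norm (Y m - Y n) < e"
    proof (intro exI allI impI)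
      fix m n assume mM: "M \<le> m" and nM: "M \<le> n"
      have a: "2/(real m+1) \<le> 2/(real M+1)" using mM by (simp add: frac_le)
      have b: "2/(real n+1) \<le> 2/(real M+1)" using nM by (simp add: frac_le)
      have "(norm (Y m - Y n))^2 < e^2"
        unfolding power2_norm_eq_inner using dst[of m n] a b M1 by simp
      then show "norm (Y m - Y n) < e" using e by (simp add: power2_less_imp_less)
    qed
  qed
  then obtain y where Yy: "Y \<longlonglongrightarrow> y" using Cauchy_convergent convergent_def by blast
  have "inner (y - c) (y - d) \<le> 0" if cd: "(c,d) \<in> G" for c d
  proof -
    define m where "m = (1/2) *\<^sub>R (c + d)"
    define f where "f z = inner (z - c) (z - d)" for z
    define q where "q z = inner (z - m) (z - m)" for z
    have key: "f y \<le> s + t * q y" if t: "0 < t" "t \<le> 1" for t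
    proof -
      have bnd: "f (Y n) \<le> s + 1/t * (1/(real n+1)) + t * q (Y n)" for n
      proof -
        obtain L C D where un: "U n = (L,C,D)" by (cases "U n") auto
        have "((1-t)*L + t*inner c d, (1-t) *\<^sub>R C + t *\<^sub>R c, (1-t) *\<^sub>R D + t *\<^sub>R d) \<in> ach G"
          by (rule ach.mix) (use U(1)[of n] un ach.base[OF cd] t in auto)
        then have "val ((1-t)*L + t*inner c d, (1-t) *\<^sub>R C + t *\<^sub>R c, (1-t) *\<^sub>R D + t *\<^sub>R d) \<le> s"
          by (rule s_ub)
        then have A: "(1-t) * val (U n) + t * f (Y n) - t^2 * q (Y n) \<le> s"
          unfolding val_mix_pt Y_def un f_def q_def m_def .
        have B: "(1-t) * (s - 1/(real n+1)) \<le> (1-t) * val (U n)"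
          using U(2)[of n] t by (intro mult_left_mono) auto
        have C: "(1-t) / (real n+1) \<le> 1/(real n+1)" using t by (intro divide_right_mono) auto
        have le1: "t * f (Y n) \<le> t * s + 1/(real n+1) + t^2 * q (Y n)"
          using A B C by (simp add: algebra_simps)
        have tn: "t + t * real n > 0" using t by (simp add: add_pos_nonneg)
        have eq: "t * s + 1/(real n+1) + t^2 * q (Y n) = t * (s + 1/t * (1/(real n+1)) + t * q (Y n))"
          using t tn by (simp add: field_simps power2_eq_square)
        show ?thesis using le1 eq t by (metis mult_le_cancel_left_pos)
      qed
      have l1: "(\<lambda>n. f (Y n)) \<longlonglongrightarrow> f y" unfolding f_def by (intro tendsto_intros Yy)
      have l2: "(\<lambda>n. s + 1/t * (1/(real n+1)) + t * q (Y n)) \<longlonglongrightarrow> s + 1/t * 0 + t * q y"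
        unfolding q_def by (intro tendsto_intros Yy inv_lim)
      show ?thesis using LIMSEQ_le[OF l1 l2] bnd by auto
    qed
    have "f y \<le> s"
    proof (rule ccontr)
      assume "\<not> f y \<le> s"
      then have pos: "f y - s > 0" by simp
      have q0: "q y \<ge> 0" unfolding q_def by simp
      define t where "t = min 1 ((f y - s) / (q y + 1))"
      have t0: "0 < t" "t \<le> 1" unfolding t_def using pos q0 by auto
      have "t * q y \<le> (f y - s) / (q y + 1) * q y" unfolding t_def using q0 by (intro mult_right_mono) auto
      also have "\<dots> < f y - s" using pos q0 by (simp add: field_simps)
      finally show False using key[OF t0] by simp
    qed
    then show ?thesis using s0 f_def by simp
  qed
  then show ?thesis by blast
qed


lemma res_ex:
  fixes A :: "'a::{real_inner,complete_space} \<Rightarrow> 'a set"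
  assumes mm: "maximal_monotone A" and b: "\<beta> > 0" and pz: "0 \<in> A p"
  shows "\<exists>y. \<exists>u\<in>A y. x = y + \<beta> *\<^sub>R u"
proof -
  have monA: "monotone_op A" using mm maximal_monotone_def by blast
  define G where "G = {(c, x - \<beta> *\<^sub>R b) | c b. b \<in> A c}"
  have mon: "inner (c-c') (d-d') \<le> 0" if hh: "(c,d)\<in>G" "(c',d')\<in>G" for c d c' d'
  proof -
    obtain b b' where bb: "b \<in> A c" "d = x - \<beta> *\<^sub>R b" "b' \<in> A c'" "d' = x - \<beta> *\<^sub>R b'"
      using hh unfolding G_def by blast
    have "inner (c-c') (b-b') \<ge> 0" using monA bb unfolding monotone_op_def by blast
    moreover have "d - d' = - (\<beta> *\<^sub>R (b - b'))" using bb by (simp add: algebra_simps)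
    then have "inner (c-c') (d-d') = - \<beta> * inner (c-c') (b-b')" by simp
    ultimately show ?thesis using b by (simp add: mult_nonneg_nonneg)
  qed
  have ne: "G \<noteq> {}" using pz G_def by auto
  obtain y where hy: "\<And>c d. (c,d) \<in> G \<Longrightarrow> inner (y - c) (y - d) \<le> 0"
    using exists_point[of G, OF mon ne] by blast
  define u where "u = (1/\<beta>) *\<^sub>R (x - y)"
  have xu: "x = y + \<beta> *\<^sub>R u" using b unfolding u_def by simp
  have hy2: "inner (c - y) (b - u) \<ge> 0" if "b \<in> A c" for c b
  proof -
    have "inner (y - c) (y - (x - \<beta> *\<^sub>R b)) \<le> 0" using hy[of c "x - \<beta> *\<^sub>R b"] that G_def by auto
    moreover have "y - (x - \<beta> *\<^sub>R b) = \<beta> *\<^sub>R (b - u)" using xu by (simp add: algebra_simps)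
    moreover have "inner (y - c) (\<beta> *\<^sub>R (b - u)) = - \<beta> * inner (c - y) (b - u)"
      by (simp add: inner_diff_left inner_diff_right algebra_simps)
    ultimately have "\<beta> * inner (c - y) (b - u) \<ge> 0" by simp
    then show ?thesis using b by (simp add: zero_le_mult_iff)
  qed
  have hy3: "inner (y - c) (u - b) \<ge> 0" if "b \<in> A c" for c b
  proof -
    have "inner (y - c) (u - b) = inner (c - y) (b - u)"
      by (simp add: inner_diff_left inner_diff_right algebra_simps)
    then show ?thesis using hy2[OF that] by simp
  qed
  define B where "B w = (if w = y then insert u (A y) else A w)" for w
  have monB: "monotone_op B"
    unfolding monotone_op_def
  proof (intro allI impI)
    fix x1 x2 u1 u2 assume h1: "u1 \<in> B x1" and h2: "u2 \<in> B x2"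
    show "inner (x1 - x2) (u1 - u2) \<ge> 0"
    proof (cases "x1 = y \<and> u1 = u")
      case True
      show ?thesis
      proof (cases "x2 = y \<and> u2 = u")
        case True then show ?thesis using \<open>x1 = y \<and> u1 = u\<close> by simp
      next
        case False
        then have "u2 \<in> A x2" using h2 B_def by (auto split: if_splits)
        then show ?thesis using hy3 True by auto
      qed
    next
      case F1: False
      then have a1: "u1 \<in> A x1" using h1 B_def by (auto split: if_splits)
      show ?thesis
      proof (cases "x2 = y \<and> u2 = u")
        case True then show ?thesis using hy2[OF a1] by auto
      next
        case False
        then have "u2 \<in> A x2" using h2 B_def by (auto split: if_splits)
        then show ?thesis using a1 monA unfolding monotone_op_def by blast
      qed
    qed
  qed
  have "\<forall>w. A w \<subseteq> B w" unfolding B_def by auto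
  then have "B = A" using mm monB unfolding maximal_monotone_def by blast
  then have "u \<in> A y" using B_def[of y] by (metis insertI1)
  then show ?thesis using xu by blast
qed

lemma res_prop:
  fixes A :: "'a::{real_inner,complete_space} \<Rightarrow> 'a set"
  assumes mm: "maximal_monotone A" and b: "\<beta> > 0" and pz: "0 \<in> A p"
  shows "\<exists>u\<in>A (resolvent A \<beta> x). x = resolvent A \<beta> x + \<beta> *\<^sub>R u"
proof -
  have monA: "monotone_op A" using mm maximal_monotone_def by blast
  have uniq: "y1 = y2" if "u1 \<in> A y1" "x = y1 + \<beta> *\<^sub>R u1" "u2 \<in> A y2" "x = y2 + \<beta> *\<^sub>R u2" for y1 y2 u1 u2
  proof -
    have m: "inner (y1 - y2) (u1 - u2) \<ge> 0" using monA that unfolding monotone_op_def by blast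
    have "\<beta> *\<^sub>R (u1 - u2) = y2 - y1" using that by (simp add: algebra_simps)
    then have "\<beta> * inner (y1 - y2) (u1 - u2) = - inner (y1 - y2) (y1 - y2)"
      by (metis inner_scaleR_right inner_minus_right minus_diff_eq)
    moreover have "\<beta> * inner (y1 - y2) (u1 - u2) \<ge> 0" using m b by simp
    ultimately have "inner (y1 - y2) (y1 - y2) \<le> 0" by simp
    then have "inner (y1 - y2) (y1 - y2) = 0" using inner_ge_zero[of "y1 - y2"] by linarith
    then show ?thesis by simp
  qed
  have "\<exists>!y. \<exists>u\<in>A y. x = y + \<beta> *\<^sub>R u" using res_ex[OF mm b pz] uniq by blast
  from theI'[OF this] show ?thesis unfolding resolvent_def .
qed

lemma res_nonexp:
  fixes A :: "'a::{real_inner,complete_space} \<Rightarrow> 'a set"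
  assumes mm: "maximal_monotone A" and b: "\<beta> > 0" and pz: "0 \<in> A p"
  shows "norm (resolvent A \<beta> x - p) \<le> norm (x - p)"
proof -
  have monA: "monotone_op A" using mm maximal_monotone_def by blast
  obtain u where u: "u \<in> A (resolvent A \<beta> x)" "x = resolvent A \<beta> x + \<beta> *\<^sub>R u"
    using res_prop[OF mm b pz] by blast
  define y where "y = resolvent A \<beta> x"
  have m: "inner (y - p) (u - 0) \<ge> 0" using monA u pz y_def unfolding monotone_op_def by blast
  define w where "w = y - p"
  have xp: "x - p = w + \<beta> *\<^sub>R u" using u y_def w_def by simp
  have "inner (w + \<beta> *\<^sub>R u) (w + \<beta> *\<^sub>R u) = inner w w + 2 * \<beta> * inner w u + \<beta>^2 * inner u u"
    by (simp add: inner_add_left inner_add_right inner_commute algebra_simps power2_eq_square)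
  then have "(norm (x - p))^2 = (norm (y - p))^2 + 2 * \<beta> * inner (y - p) u + \<beta>^2 * (norm u)^2"
    unfolding power2_norm_eq_inner xp w_def .
  moreover have "2 * \<beta> * inner (y - p) u \<ge> 0" using m b by simp
  moreover have "\<beta>^2 * (norm u)^2 \<ge> 0" by simp
  ultimately have "(norm (y - p))^2 \<le> (norm (x - p))^2" by linarith
  then show ?thesis unfolding y_def by (rule power2_le_imp_le) simp
qed



theorem mainTheorem8:
  fixes A :: "'a::{real_inner, complete_space} \<Rightarrow> 'a set"
    and \<alpha> \<beta> :: "nat \<Rightarrow> real" and e x :: "nat \<Rightarrow> 'a"
    and a E :: "nat \<Rightarrow> nat" and \<E> \<D> :: nat and p :: 'a
  assumes maxmon: "maximal_monotone A"
    and alpha: "\<And>n. 0 < \<alpha> n \<and> \<alpha> n < 1"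
    and beta: "\<And>n. \<beta> n > 0"
    and HPPA: "\<And>n. x (Suc n) = \<alpha> n *\<^sub>R x 0 + (1 - \<alpha> n) *\<^sub>R (resolvent A (\<beta> n) (x n) + e n)"
    and mono_a: "mono a" and mono_E: "mono E"
    and Q1: "\<And>k n. n \<ge> a k \<Longrightarrow> \<alpha> n \<le> 1 / (real k + 1)"
    and Q4: "\<And>k n. (\<Sum>i = E k + 1 .. E k + n. norm (e i)) \<le> 1 / (real k + 1)"
    and bound_E: "real \<E> \<ge> 1 + (\<Sum>i = 0 .. E 0. norm (e i))"
    and pS: "p \<in> zeros_op A"
    and bound_D: "real \<D> \<ge> norm (x 0 - p)"
  shows "\<forall>k. \<forall>n \<ge> max (a (2 * (2 * \<D> + \<E>) * (k + 1) - 1)) (E (2 * k + 1) + 1).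
           norm (x (Suc n) - resolvent A (\<beta> n) (x n)) \<le> 1 / (real k + 1)"
  
proof -
  have pz: "0 \<in> A p" using pS unfolding zeros_op_def by simp
  define J where "J n = resolvent A (\<beta> n) (x n)" for n
  have Jb: "norm (J n - p) \<le> norm (x n - p)" for n
    unfolding J_def using res_nonexp[OF maxmon beta pz] .
  have en: "\<And>i. norm (e i) \<ge> 0" by simp
  have b1: "norm (x n - p) \<le> real \<D> + (\<Sum>i<n. norm (e i))" for n
  proof (induction n)
    case 0 then show ?case using bound_D by simp
  next
    case (Suc n)
    define T where "T = (\<Sum>i<n. norm (e i)) + norm (e n)"
    have T0: "T \<ge> 0" unfolding T_def by (simp add: sum_nonneg)
    have al: "0 < \<alpha> n" "\<alpha> n < 1" using alpha by auto
    have eq: "x (Suc n) - p = \<alpha> n *\<^sub>R (x 0 - p) + (1 - \<alpha> n) *\<^sub>R ((J n - p) + e n)"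
      unfolding HPPA J_def by (simp add: algebra_simps)
    have "norm (x (Suc n) - p) \<le> norm (\<alpha> n *\<^sub>R (x 0 - p)) + norm ((1 - \<alpha> n) *\<^sub>R ((J n - p) + e n))"
      unfolding eq by (rule norm_triangle_ineq)
    also have "\<dots> = \<alpha> n * norm (x 0 - p) + (1 - \<alpha> n) * norm ((J n - p) + e n)"
      using al by simp
    also have "\<dots> \<le> \<alpha> n * real \<D> + (1 - \<alpha> n) * (real \<D> + T)"
    proof (intro add_mono mult_left_mono)
      show "norm (x 0 - p) \<le> real \<D>" using bound_D .
      have "norm ((J n - p) + e n) \<le> norm (J n - p) + norm (e n)" by (rule norm_triangle_ineq)
      then show "norm ((J n - p) + e n) \<le> real \<D> + T" using Jb[of n] Suc T_def by linarith
    qed (use al in auto)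
    also have "\<dots> = real \<D> + (1 - \<alpha> n) * T" by (simp add: algebra_simps)
    also have "\<dots> \<le> real \<D> + T" using al T0 by (simp add: mult_left_le_one_le)
    finally show ?case unfolding T_def by simp
  qed
  have b2: "(\<Sum>i<n. norm (e i)) \<le> real \<E>" for n
  proof -
    have "(\<Sum>i<n. norm (e i)) \<le> (\<Sum>i\<le>E 0 + n. norm (e i))"
      by (rule sum_mono2) auto
    also have "\<dots> = (\<Sum>i\<le>E 0. norm (e i)) + (\<Sum>i=Suc (E 0)..E 0 + n. norm (e i))"
      by (rule sum_up_index_split)
    also have "\<dots> \<le> (\<Sum>i=0..E 0. norm (e i)) + 1"
      using Q4[of 0 n] by (simp add: atLeast0AtMost)
    also have "\<dots> \<le> real \<E>" using bound_E by simp
    finally show ?thesis .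
  qed
  have b3: "norm (x 0 - J n) \<le> real (2 * \<D> + \<E>)" for n
  proof -
    have "norm (x 0 - J n) \<le> norm (x 0 - p) + norm (J n - p)"
      using norm_triangle_ineq4[of "x 0 - p" "J n - p"] by simp
    also have "\<dots> \<le> real \<D> + (real \<D> + real \<E>)"
      using bound_D Jb[of n] b1[of n] b2[of n] by linarith
    finally show ?thesis by simp
  qed
  have E1: "real \<E> \<ge> 1" using bound_E sum_nonneg[of "{0..E 0}" "\<lambda>i. norm (e i)"] by simp
  show ?thesis
  proof (intro allI impI)
    fix k n
    assume n: "max (a (2 * (2 * \<D> + \<E>) * (k + 1) - 1)) (E (2 * k + 1) + 1) \<le> n"
    define M where "M = 2 * \<D> + \<E>"
    have M1: "M \<ge> 1" using E1 M_def by simp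
    define K where "K = 2 * M * (k + 1)"
    have K1: "K \<ge> 1" using M1 K_def by simp
    have na: "a (K - 1) \<le> n" using n M_def K_def by simp
    have nE: "E (2 * k + 1) + 1 \<le> n" using n by simp
    have rK: "real (K - 1) + 1 = 2 * real M * (real k + 1)"
      using K1 K_def by (simp add: of_nat_diff algebra_simps)
    have al: "\<alpha> n \<le> 1 / (2 * real M * (real k + 1))" using Q1[OF na] rK by simp
    have al2: "0 < \<alpha> n" "\<alpha> n < 1" using alpha by auto
    have Mpos: "real M > 0" using M1 by simp
    have t1: "\<alpha> n * norm (x 0 - J n) \<le> 1 / (2 * (real k + 1))"
    proof -
      have nz: "real M * 2 + real M * (real k * 2) \<noteq> 0"
        using Mpos by (smt (verit) mult_nonneg_nonneg of_nat_0_le_iff)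
      have "\<alpha> n * norm (x 0 - J n) \<le> (1 / (2 * real M * (real k + 1))) * real M"
        using b3[of n] al al2 M_def by (intro mult_mono) auto
      also have "\<dots> = 1 / (2 * (real k + 1))" using Mpos nz by (simp add: field_simps)
      finally show ?thesis .
    qed
    have t2: "norm (e n) \<le> 1 / (2 * (real k + 1))"
    proof -
      define E' where "E' = E (2 * k + 1)"
      have "norm (e n) \<le> (\<Sum>i = E' + 1 .. E' + (n - E'). norm (e i))"
        by (rule member_le_sum) (use nE E'_def in auto)
      also have "\<dots> \<le> 1 / (real (2 * k + 1) + 1)" unfolding E'_def by (rule Q4)
      also have "\<dots> = 1 / (2 * (real k + 1))" by simp
      finally show ?thesis .
    qed
    have eq: "x (Suc n) - J n = \<alpha> n *\<^sub>R (x 0 - J n) + (1 - \<alpha> n) *\<^sub>R e n"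
      unfolding HPPA J_def by (simp add: algebra_simps)
    have "norm (x (Suc n) - J n) \<le> norm (\<alpha> n *\<^sub>R (x 0 - J n)) + norm ((1 - \<alpha> n) *\<^sub>R e n)"
      unfolding eq by (rule norm_triangle_ineq)
    also have "\<dots> = \<alpha> n * norm (x 0 - J n) + (1 - \<alpha> n) * norm (e n)" using al2 by simp
    also have "\<dots> \<le> \<alpha> n * norm (x 0 - J n) + norm (e n)"
      using al2 by (simp add: mult_left_le_one_le)
    also have "\<dots> \<le> 1 / (2 * (real k + 1)) + 1 / (2 * (real k + 1))" using t1 t2 by linarith
    also have "\<dots> = 1 / (real k + 1)" by (simp add: field_simps)
    finally show "norm (x (Suc n) - resolvent A (\<beta> n) (x n)) \<le> 1 / (real k + 1)" unfolding J_def .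
  qed
qed

end
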